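(* Let $X\subseteq\mathbb{C}^n$ be a complex analytic set and $\mathcal M\subseteq\mathcal O_X^p$ an $\mathcal O_X$-submodule. Then $\mathcal M\subseteq\mathcal M_{\mathcal L}\subseteq\overline{\mathcal M}$ at every point of $X$.
   Context: $\mathcal L_X$ is the sheaf of locally Lipschitz functions on $X$, and $\mathcal M_{\mathcal L}:=\mathcal L_X\mathcal M\cap\mathcal O_X^p$ is the strong Lipschitz saturation of $\mathcal M$. $\overline{\mathcal M}$ denotes the integral closure of $\mathcal M$. *)

theory Defs
  imports "HOL-Analysis.Analysis"
begin

definition cscale :: "complex \<Rightarrow> complex^'p \<Rightarrow> complex^'p" where
  "cscale c v = (\<chi> i. c * v$i)"

definition holo_on :: "(complex^'n) set \<Rightarrow> (complex^'n \<Rightarrow> complex) \<Rightarrow> bool" where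
  "holo_on U g \<longleftrightarrow> (\<forall>z\<in>U. \<exists>L. (g has_derivative L) (at z) \<and> (\<forall>c v. L (cscale c v) = c * L v))"

definition analytic_set :: "(complex^'n) set \<Rightarrow> bool" where
  "analytic_set X \<longleftrightarrow> (\<forall>z\<in>X. \<exists>U k (f :: nat \<Rightarrow> complex^'n \<Rightarrow> complex).
      open U \<and> z \<in> U \<and> (\<forall>i<k. holo_on U (f i)) \<and> X \<inter> U = {y\<in>U. \<forall>i<k. f i y = 0})"

definition germ_eq :: "(complex^'n) set \<Rightarrow> complex^'n \<Rightarrow> (complex^'n \<Rightarrow> 'b) \<Rightarrow> (complex^'n \<Rightarrow> 'b) \<Rightarrow> bool" where
  "germ_eq X x0 f g \<longleftrightarrow> (\<exists>U. open U \<and> x0 \<in> U \<and> (\<forall>y\<in>X \<inter> U. f y = g y))"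

text \<open>Representatives of germs in the stalk O_{X,x0}.\<close>
definition OX :: "(complex^'n) set \<Rightarrow> complex^'n \<Rightarrow> (complex^'n \<Rightarrow> complex) set" where
  "OX X x0 = {f. \<exists>U g. open U \<and> x0 \<in> U \<and> holo_on U g \<and> (\<forall>y\<in>X \<inter> U. f y = g y)}"

definition OXp :: "(complex^'n) set \<Rightarrow> complex^'n \<Rightarrow> (complex^'n \<Rightarrow> complex^'p) set" where
  "OXp X x0 = {h. \<forall>j. (\<lambda>y. h y $ j) \<in> OX X x0}"

text \<open>Representatives of germs in the stalk L_{X,x0} of locally Lipschitz functions on X.\<close>
definition LX :: "(complex^'n) set \<Rightarrow> complex^'n \<Rightarrow> (complex^'n \<Rightarrow> complex) set" where
  "LX X x0 = {f. \<exists>U C. open U \<and> x0 \<in> U \<and> C-lipschitz_on (X \<inter> U) f}"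

definition is_submodule_germ :: "(complex^'n) set \<Rightarrow> complex^'n \<Rightarrow> (complex^'n \<Rightarrow> complex^'p) set \<Rightarrow> bool" where
  "is_submodule_germ X x0 M \<longleftrightarrow>
     M \<subseteq> OXp X x0 \<and> (\<lambda>_. 0) \<in> M \<and>
     (\<forall>a\<in>M. \<forall>b\<in>M. (\<lambda>y. a y + b y) \<in> M) \<and>
     (\<forall>c\<in>OX X x0. \<forall>a\<in>M. (\<lambda>y. cscale (c y) (a y)) \<in> M) \<and>
     (\<forall>a\<in>M. \<forall>b. germ_eq X x0 a b \<longrightarrow> b \<in> M)"

text \<open>Stalk at x0 of the strong Lipschitz saturation M_L = L_X M \<inter> O_X^p.\<close>
definition lip_saturation :: "(complex^'n) set \<Rightarrow> complex^'n \<Rightarrow> (complex^'n \<Rightarrow> complex^'p) set \<Rightarrow> (complex^'n \<Rightarrow> complex^'p) set" where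
  "lip_saturation X x0 M = {h \<in> OXp X x0. \<exists>k (f :: nat \<Rightarrow> complex^'n \<Rightarrow> complex) m.
      (\<forall>i<k. f i \<in> LX X x0 \<and> m i \<in> M) \<and>
      germ_eq X x0 h (\<lambda>y. \<Sum>i<k. cscale (f i y) (m i y))}"

text \<open>Stalk at x0 of the integral closure of M (Gaffney's curve criterion):
  h is integral over M iff for every analytic curve phi : (C,0) \<rightarrow> (X,x0),
  h \<circ> phi lies in the O_1-module generated by phi^* M.\<close>
definition integral_closure :: "(complex^'n) set \<Rightarrow> complex^'n \<Rightarrow> (complex^'n \<Rightarrow> complex^'p) set \<Rightarrow> (complex^'n \<Rightarrow> complex^'p) set" where
  "integral_closure X x0 M = {h \<in> OXp X x0. \<forall>(\<phi> :: complex \<Rightarrow> complex^'n) r.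
      (0 < r \<and> (\<forall>j. (\<lambda>t. \<phi> t $ j) holomorphic_on ball 0 r) \<and> \<phi> 0 = x0 \<and> \<phi> ` ball 0 r \<subseteq> X) \<longrightarrow>
      (\<exists>s k (a :: nat \<Rightarrow> complex \<Rightarrow> complex) m. 0 < s \<and>
         (\<forall>i<k. a i holomorphic_on ball 0 s \<and> m i \<in> M) \<and>
         (\<forall>t\<in>ball 0 s. h (\<phi> t) = (\<Sum>i<k. cscale (a i t) (m i (\<phi> t)))))}"

end

theory Submission
  imports Defs "HOL-Complex_Analysis.Complex_Analysis"
begin

lemma ev_ball:
  assumes "\<forall>\<^sub>F t in nhds (0::complex). P t"
  shows "\<exists>d>0. \<forall>t\<in>ball 0 d. P t"
  using assms unfolding eventually_nhds_metric by (metis dist_commute mem_ball)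

lemma ball_ev:
  assumes "0 < (s::real)" shows "\<forall>\<^sub>F t in nhds (0::complex). t \<in> ball 0 s"
  using assms by (intro eventually_nhds_in_open) auto

lemma dich:
  fixes f :: "complex \<Rightarrow> complex"
  assumes hol: "f holomorphic_on ball 0 s" and s: "0 < s"
  shows "(\<forall>t\<in>ball 0 s. f t = 0) \<or> (\<exists>n u r. 0 < r \<and> r \<le> s \<and> u holomorphic_on ball 0 r \<and>
            (\<forall>w\<in>ball 0 r. f w = w^n * u w \<and> u w \<noteq> 0))"
proof (cases "f 0 = 0")
  case True
  show ?thesis
  proof (cases "f constant_on ball 0 s")
    case True
    then obtain k where "\<forall>t\<in>ball 0 s. f t = k" unfolding constant_on_def by blast
    with \<open>f 0 = 0\<close> s show ?thesis by auto
  next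
    case False
    have c0: "0 \<in> ball (0::complex) s" using s by simp
    show ?thesis
    proof (rule holomorphic_factor_zero_nonconstant[OF hol open_ball connected_ball c0 \<open>f 0 = 0\<close> False])
      fix g r n assume A: "0 < n" "0 < r" "ball (0::complex) r \<subseteq> ball 0 s" "g holomorphic_on ball 0 r"
        "\<And>w. w \<in> ball 0 r \<Longrightarrow> f w = (w - 0)^n * g w" "\<And>w. w \<in> ball 0 r \<Longrightarrow> g w \<noteq> 0"
      have "r \<le> s"
      proof (rule ccontr)
        assume "\<not> r \<le> s"
        hence "complex_of_real s \<in> ball 0 r" using s by simp
        with A(3) have "complex_of_real s \<in> ball 0 s" by blast
        thus False by simp
      qed
      show ?thesis
        apply (rule disjI2)
        apply (rule exI[of _ n], rule exI[of _ g], rule exI[of _ r])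
        using A \<open>r \<le> s\<close> by auto
    qed
  qed
next
  case False
  have "continuous (at 0) f"
    using hol s by (meson centre_in_ball holomorphic_on_imp_continuous_on open_ball continuous_on_eq_continuous_at)
  then obtain e where e: "e > 0" "\<And>y. dist 0 y < e \<Longrightarrow> f y \<noteq> 0"
    using continuous_at_avoid[of 0 f 0] False by blast
  show ?thesis
    apply (rule disjI2)
    apply (rule exI[of _ 0], rule exI[of _ f], rule exI[of _ "min e s"])
    using e s holomorphic_on_subset[OF hol subset_ball[of "min e s" s 0]] by auto
qed

lemma vec_has_derivative:
  fixes \<phi> :: "complex \<Rightarrow> complex^'n"
  assumes "\<And>j. ((\<lambda>t. \<phi> t $ j) has_field_derivative d j) (at t)"
  shows "(\<phi> has_derivative (\<lambda>z. \<chi> j. d j * z)) (at t)"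
proof -
  have bl: "bounded_linear (\<lambda>z::complex. \<chi> j. d j * z)"
    by (rule bounded_linearI') (auto simp: vec_eq_iff algebra_simps vector_scaleR_component)
  have "((\<lambda>y. \<chi> j. ((\<phi> y $ j - \<phi> t $ j) - d j * (y - t)) /\<^sub>R norm (y - t)) \<longlongrightarrow> (\<chi> j. 0)) (at t)"
    apply (rule tendsto_vec_lambda)
    using assms unfolding has_field_derivative_def has_derivative_at_within by auto
  moreover have "(\<lambda>y. \<chi> j::'n. ((\<phi> y $ j - \<phi> t $ j) - d j * (y - t)) /\<^sub>R norm (y - t))
     = (\<lambda>y. (\<phi> y - \<phi> t - (\<chi> j. d j * (y - t))) /\<^sub>R norm (y - t))"
    by (rule ext) (simp add: vec_eq_iff)
  ultimately have "((\<lambda>y. (\<phi> y - \<phi> t - (\<chi> j. d j * (y - t))) /\<^sub>R norm (y - t)) \<longlongrightarrow> 0) (at t)"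
    unfolding zero_vec_def by simp
  then show ?thesis using bl unfolding has_derivative_at_within by simp
qed

lemma comp_holo:
  fixes G :: "complex^'n \<Rightarrow> complex" and \<phi> :: "complex \<Rightarrow> complex^'n"
  assumes G: "holo_on U G" and B: "open B" and ph: "\<And>j. (\<lambda>t. \<phi> t $ j) holomorphic_on B"
    and sub: "\<phi> ` B \<subseteq> U"
  shows "(\<lambda>t. G (\<phi> t)) holomorphic_on B"
proof -
  have "\<forall>t\<in>B. \<exists>f'. DERIV (\<lambda>t. G (\<phi> t)) t :> f'"
  proof
    fix t assume t: "t \<in> B"
    have "\<forall>j. \<exists>d. ((\<lambda>t. \<phi> t $ j) has_field_derivative d) (at t)"
      using ph t B holomorphic_on_open by blast
    then obtain d where d: "\<And>j. ((\<lambda>t. \<phi> t $ j) has_field_derivative d j) (at t)" by metis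
    have dphi: "(\<phi> has_derivative (\<lambda>z. \<chi> j. d j * z)) (at t)" by (rule vec_has_derivative[OF d])
    obtain L where L: "(G has_derivative L) (at (\<phi> t))" "\<forall>c v. L (cscale c v) = c * L v"
      using G t sub unfolding holo_on_def by blast
    have "((\<lambda>t. G (\<phi> t)) has_derivative (L \<circ> (\<lambda>z. \<chi> j. d j * z))) (at t)"
      using diff_chain_at[OF dphi L(1)] by (simp add: o_def)
    moreover have "L \<circ> (\<lambda>z. \<chi> j. d j * z) = (*) (L (\<chi> j. d j))"
    proof
      fix z
      have "(\<chi> j. d j * z) = cscale z (\<chi> j. d j)" by (simp add: cscale_def vec_eq_iff mult.commute)
      then show "(L \<circ> (\<lambda>z. \<chi> j. d j * z)) z = (L (\<chi> j. d j)) * z" using L(2) by (simp add: mult.commute)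
    qed
    ultimately have "((\<lambda>t. G (\<phi> t)) has_derivative (*) (L (\<chi> j. d j))) (at t)" by simp
    thus "\<exists>f'. DERIV (\<lambda>t. G (\<phi> t)) t :> f'" unfolding has_field_derivative_def by blast
  qed
  thus ?thesis using B holomorphic_on_open by blast
qed

lemma hol_an: "f holomorphic_on ball 0 r \<Longrightarrow> 0 < r \<Longrightarrow> f analytic_on {0}"
  unfolding analytic_on_def by blast

lemma choice3:
  assumes "\<forall>p\<in>S. \<exists>n u r. Q p n u r"
  shows "\<exists>N U R. \<forall>p\<in>S. Q p (N p) (U p) (R p)"
proof -
  have "\<forall>p\<in>S. \<exists>x. Q p (fst x) (fst (snd x)) (snd (snd x))"
  proof
    fix p assume "p \<in> S"
    then obtain n u r where "Q p n u r" using assms by blast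
    then show "\<exists>x. Q p (fst x) (fst (snd x)) (snd (snd x))" by (intro exI[of _ "(n,u,r)"]) simp
  qed
  then have "\<exists>F. \<forall>p\<in>S. Q p (fst (F p)) (fst (snd (F p))) (snd (snd (F p)))" by (rule bchoice)
  then obtain F where "\<forall>p\<in>S. Q p (fst (F p)) (fst (snd (F p))) (snd (snd (F p)))" by blast
  then show ?thesis
    by (intro exI[of _ "\<lambda>p. fst (F p)"] exI[of _ "\<lambda>p. fst (snd (F p))"] exI[of _ "\<lambda>p. snd (snd (F p))"]) simp
qed


lemma key:
  fixes I :: "'i set" and s :: real and g :: "'j::finite \<Rightarrow> complex \<Rightarrow> complex"
    and v :: "'i \<Rightarrow> 'j \<Rightarrow> complex \<Rightarrow> complex" and c :: "'i \<Rightarrow> complex \<Rightarrow> complex"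
  assumes "finite I" "0 < s" "\<forall>l\<in>I. continuous_on (ball 0 s) (c l)"
    "\<forall>l\<in>I. \<forall>j. v l j holomorphic_on ball 0 s" "\<forall>j. g j holomorphic_on ball 0 s"
    "\<forall>t\<in>ball 0 s. \<forall>j. g j t = (\<Sum>l\<in>I. c l t * v l j t)"
  shows "\<exists>a. (\<forall>l\<in>I. a l analytic_on {0}) \<and> (\<forall>\<^sub>F t in nhds 0. \<forall>j. g j t = (\<Sum>l\<in>I. a l t * v l j t))"
  using assms
proof (induction I arbitrary: s g v c rule: finite_remove_induct)
  case empty
  have "\<forall>\<^sub>F t in nhds 0. \<forall>j. g j t = (\<Sum>l\<in>{}. 0 * v l j t)"
    using ball_ev[OF empty.prems(1)] by eventually_elim (use empty.prems(5) in simp)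
  then show ?case by (intro exI[of _ "\<lambda>l t. 0"] conjI) auto
next
  case (remove A)
  note s0 = remove.prems(1) and cc = remove.prems(2) and hv = remove.prems(3)
    and hg = remove.prems(4) and eq = remove.prems(5)
  have finA: "finite A" using remove.hyps by simp
  define S where "S = {p \<in> A \<times> UNIV. \<not> (\<forall>t\<in>ball 0 s. v (fst p) (snd p) t = 0)}"
  show ?case
  proof (cases "S = {}")
    case True
    have z: "\<forall>l\<in>A. \<forall>j. \<forall>t\<in>ball 0 s. v l j t = 0" using True unfolding S_def by auto
    have "\<forall>\<^sub>F t in nhds 0. \<forall>j. g j t = (\<Sum>l\<in>A. 0 * v l j t)"
      using ball_ev[OF s0] by eventually_elim (use eq z in simp)
    then show ?thesis by (intro exI[of _ "\<lambda>l t. 0"] conjI) auto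
  next
    case False
    have "finite (A \<times> (UNIV::'j set))" using finA by simp
    then have finS: "finite S" unfolding S_def by (rule finite_subset[rotated]) auto
    have "\<forall>p\<in>S. \<exists>n u r. 0 < r \<and> r \<le> s \<and> u holomorphic_on ball 0 r \<and>
        (\<forall>w\<in>ball 0 r. v (fst p) (snd p) w = w ^ n * u w \<and> u w \<noteq> 0)"
    proof
      fix p assume p: "p \<in> S"
      then have "fst p \<in> A" unfolding S_def by auto
      then have "v (fst p) (snd p) holomorphic_on ball 0 s" using hv by blast
      from dich[OF this s0] p show "\<exists>n u r. 0 < r \<and> r \<le> s \<and> u holomorphic_on ball 0 r \<and>
        (\<forall>w\<in>ball 0 r. v (fst p) (snd p) w = w ^ n * u w \<and> u w \<noteq> 0)"
        unfolding S_def by blast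
    qed
    from choice3[OF this] obtain N U R where NUR: "\<forall>p\<in>S. 0 < R p \<and> R p \<le> s \<and> U p holomorphic_on ball 0 (R p) \<and>
        (\<forall>w\<in>ball 0 (R p). v (fst p) (snd p) w = w ^ N p * U p w \<and> U p w \<noteq> 0)"
      by blast
    define \<rho> where "\<rho> = Min (R ` S)"
    have \<rho>in: "\<rho> \<in> R ` S" unfolding \<rho>_def using finS False by (intro Min_in) auto
    have \<rho>pos: "0 < \<rho>" using \<rho>in NUR by auto
    have \<rho>le: "\<And>p. p \<in> S \<Longrightarrow> \<rho> \<le> R p" unfolding \<rho>_def using finS by (intro Min_le) auto
    have \<rho>s: "\<rho> \<le> s" using \<rho>in NUR by auto
    have bsub: "ball 0 \<rho> \<subseteq> ball 0 s" using \<rho>s by (rule subset_ball)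
    have bsubR: "\<And>p. p \<in> S \<Longrightarrow> ball 0 \<rho> \<subseteq> ball 0 (R p)" using \<rho>le by (rule subset_ball)
    have "Min (N ` S) \<in> N ` S" using finS False by (intro Min_in) auto
    then obtain p0 where p0: "p0 \<in> S" "N p0 = Min (N ` S)" by (metis imageE)
    have p0min: "\<And>p. p \<in> S \<Longrightarrow> N p0 \<le> N p" unfolding p0(2) using finS by (intro Min_le) auto
    obtain i j0 where ij: "p0 = (i, j0)" by (cases p0)
    have iA: "i \<in> A" using p0(1) ij unfolding S_def by auto
    have U0: "\<forall>w\<in>ball 0 \<rho>. v i j0 w = w ^ N p0 * U p0 w \<and> U p0 w \<noteq> 0"
      using NUR p0(1) bsubR[OF p0(1)] ij by fastforce
    have U0h: "U p0 holomorphic_on ball 0 \<rho>"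
      using NUR p0(1) bsubR[OF p0(1)] holomorphic_on_subset by blast
    define q where "q l t = (if (l, j0) \<in> S then U (l, j0) t * t ^ (N (l, j0) - N p0) / U p0 t else 0)" for l t
    have qhol: "q l holomorphic_on ball 0 \<rho>" for l
    proof (cases "(l, j0) \<in> S")
      case True
      have "U (l, j0) holomorphic_on ball 0 \<rho>"
        using NUR True bsubR[OF True] holomorphic_on_subset by blast
      then have "(\<lambda>t. U (l, j0) t * t ^ (N (l, j0) - N p0) / U p0 t) holomorphic_on ball 0 \<rho>"
        using U0h U0 by (intro holomorphic_intros) auto
      then show ?thesis unfolding q_def using True by simp
    next
      case False
      then show ?thesis unfolding q_def by simp
    qed
    have qrel: "\<forall>l\<in>A. \<forall>t\<in>ball 0 \<rho>. v l j0 t = q l t * v i j0 t"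
    proof (intro ballI)
      fix l and t :: complex assume l: "l \<in> A" and t: "t \<in> ball 0 \<rho>"
      show "v l j0 t = q l t * v i j0 t"
      proof (cases "(l, j0) \<in> S")
        case True
        have vl: "v l j0 t = t ^ N (l, j0) * U (l, j0) t"
          using NUR True bsubR[OF True] t by fastforce
        have le: "N p0 \<le> N (l, j0)" using p0min[OF True] .
        have pw: "t ^ (N (l, j0) - N p0) * t ^ N p0 = t ^ N (l, j0)"
          by (simp add: power_add[symmetric] le)
        have "q l t * v i j0 t = U (l, j0) t * t ^ (N (l, j0) - N p0) / U p0 t * (t ^ N p0 * U p0 t)"
          unfolding q_def using True U0 t by simp
        also have "\<dots> = U (l, j0) t * (t ^ (N (l, j0) - N p0) * t ^ N p0)"
          using U0 t by (simp add: field_simps)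
        also have "\<dots> = v l j0 t" using pw vl by simp
        finally show ?thesis by simp
      next
        case False
        have "t \<in> ball 0 s" using t bsub by blast
        then have "v l j0 t = 0" using l False unfolding S_def by auto
        then show ?thesis unfolding q_def using False by simp
      qed
    qed
    define e where "e t = c i t + (\<Sum>l\<in>A - {i}. c l t * q l t)" for t
    have eq3: "\<forall>t\<in>ball 0 \<rho>. \<forall>j. g j t = e t * v i j t + (\<Sum>l\<in>A - {i}. c l t * (v l j t - q l t * v i j t))"
    proof (intro ballI allI)
      fix t :: complex and j assume t: "t \<in> ball 0 \<rho>"
      have "g j t = (\<Sum>l\<in>A. c l t * v l j t)" using eq t bsub by blast
      also have "\<dots> = c i t * v i j t + (\<Sum>l\<in>A - {i}. c l t * v l j t)"
        using finA iA by (simp add: sum.remove)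
      also have "\<dots> = e t * v i j t + (\<Sum>l\<in>A - {i}. c l t * (v l j t - q l t * v i j t))"
        unfolding e_def by (simp add: sum_subtractf right_diff_distrib sum_distrib_right distrib_right mult.assoc)
      finally show "g j t = e t * v i j t + (\<Sum>l\<in>A - {i}. c l t * (v l j t - q l t * v i j t))" .
    qed
    have ccr: "\<forall>l\<in>A. continuous_on (ball 0 \<rho>) (c l)" using cc bsub continuous_on_subset by blast
    have hvr: "\<forall>l\<in>A. \<forall>j. v l j holomorphic_on ball 0 \<rho>" using hv bsub holomorphic_on_subset by blast
    have hgr: "\<forall>j. g j holomorphic_on ball 0 \<rho>" using hg bsub holomorphic_on_subset by blast
    have qc: "\<And>l. continuous_on (ball 0 \<rho>) (q l)" using qhol holomorphic_on_imp_continuous_on by blast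
    have econt: "continuous_on (ball 0 \<rho>) e"
      unfolding e_def using ccr iA qc
      by (intro continuous_on_add continuous_on_sum continuous_on_mult) auto
    have ehol: "e holomorphic_on ball 0 \<rho>"
    proof (rule no_isolated_singularity'[where K = "{0}"])
      fix z assume "z \<in> {0::complex}"
      then have "z \<in> ball 0 \<rho>" using \<rho>pos by simp
      then show "(e \<longlongrightarrow> e z) (at z within ball 0 \<rho>)"
        using econt unfolding continuous_on_def by blast
    next
      have h1: "g j0 holomorphic_on ball 0 \<rho> - {0}"
        using hgr by (meson Diff_subset holomorphic_on_subset)
      have h2: "v i j0 holomorphic_on ball 0 \<rho> - {0}"
        using hvr iA by (meson Diff_subset holomorphic_on_subset)
      have h3: "\<And>t. t \<in> ball 0 \<rho> - {0} \<Longrightarrow> v i j0 t \<noteq> 0" using U0 by auto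
      have "(\<lambda>t. g j0 t / v i j0 t) holomorphic_on ball 0 \<rho> - {0}"
        by (rule holomorphic_on_divide[OF h1 h2 h3])
      moreover have "g j0 t / v i j0 t = e t" if t: "t \<in> ball 0 \<rho> - {0}" for t
      proof -
        have "g j0 t = e t * v i j0 t + (\<Sum>l\<in>A - {i}. c l t * (v l j0 t - q l t * v i j0 t))"
          using eq3 t by blast
        also have "(\<Sum>l\<in>A - {i}. c l t * (v l j0 t - q l t * v i j0 t)) = 0"
          using qrel t by (intro sum.neutral) auto
        finally have "g j0 t = e t * v i j0 t" by simp
        moreover have "v i j0 t \<noteq> 0" using U0 t by auto
        ultimately show ?thesis by simp
      qed
      ultimately show "e holomorphic_on ball 0 \<rho> - {0}" by (rule holomorphic_transform)
    qed auto
    define g' where "g' j t = g j t - e t * v i j t" for j t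
    define v' where "v' l j t = v l j t - q l t * v i j t" for l j t
    have IHprems: "\<forall>l\<in>A - {i}. continuous_on (ball 0 \<rho>) (c l)"
      "\<forall>l\<in>A - {i}. \<forall>j. v' l j holomorphic_on ball 0 \<rho>" "\<forall>j. g' j holomorphic_on ball 0 \<rho>"
      "\<forall>t\<in>ball 0 \<rho>. \<forall>j. g' j t = (\<Sum>l\<in>A - {i}. c l t * v' l j t)"
      subgoal using cc bsub continuous_on_subset by blast
      subgoal unfolding v'_def using hvr iA qhol
        by (intro ballI allI holomorphic_on_diff holomorphic_on_mult) auto
      subgoal unfolding g'_def using hvr hgr iA ehol
        by (intro allI holomorphic_on_diff holomorphic_on_mult) auto
      subgoal unfolding g'_def v'_def using eq3 by simp
      done
    obtain a' where a': "\<forall>l\<in>A - {i}. a' l analytic_on {0}"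
      "\<forall>\<^sub>F t in nhds 0. \<forall>j. g' j t = (\<Sum>l\<in>A - {i}. a' l t * v' l j t)"
      using remove.IH[OF iA \<rho>pos IHprems] by blast
    define a where "a l = (if l = i then (\<lambda>t. e t - (\<Sum>l\<in>A - {i}. a' l t * q l t)) else a' l)" for l
    have aan: "\<forall>l\<in>A. a l analytic_on {0}"
    proof
      fix l assume l: "l \<in> A"
      show "a l analytic_on {0}"
      proof (cases "l = i")
        case True
        have "e analytic_on {0}" using hol_an[OF ehol \<rho>pos] .
        moreover have "\<And>l. q l analytic_on {0}" using hol_an[OF qhol \<rho>pos] .
        ultimately show ?thesis unfolding a_def using True a'(1)
          by (simp, intro analytic_intros) auto
      next
        case False
        then show ?thesis unfolding a_def using a'(1) l by simp
      qed
    qed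
    have "\<forall>\<^sub>F t in nhds 0. \<forall>j. g j t = (\<Sum>l\<in>A. a l t * v l j t)"
      using a'(2) ball_ev[OF \<rho>pos]
    proof eventually_elim
      case (elim t)
      show ?case
      proof
        fix j
        have "(\<Sum>l\<in>A. a l t * v l j t) = a i t * v i j t + (\<Sum>l\<in>A - {i}. a l t * v l j t)"
          using finA iA by (simp add: sum.remove)
        also have "(\<Sum>l\<in>A - {i}. a l t * v l j t) = (\<Sum>l\<in>A - {i}. a' l t * v l j t)"
          unfolding a_def by (intro sum.cong) auto
        finally have 1: "(\<Sum>l\<in>A. a l t * v l j t) = a i t * v i j t + (\<Sum>l\<in>A - {i}. a' l t * v l j t)" .
        have "g j t = e t * v i j t + g' j t" unfolding g'_def by simp
        also have "g' j t = (\<Sum>l\<in>A - {i}. a' l t * v' l j t)" using elim(1) by blast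
        also have "\<dots> = (\<Sum>l\<in>A - {i}. a' l t * v l j t) - (\<Sum>l\<in>A - {i}. a' l t * q l t) * v i j t"
          unfolding v'_def by (simp add: sum_subtractf right_diff_distrib sum_distrib_right mult.assoc)
        finally have 2: "g j t = e t * v i j t + ((\<Sum>l\<in>A - {i}. a' l t * v l j t) - (\<Sum>l\<in>A - {i}. a' l t * q l t) * v i j t)" .
        have ai: "a i t = e t - (\<Sum>l\<in>A - {i}. a' l t * q l t)" unfolding a_def by simp
        show "g j t = (\<Sum>l\<in>A. a l t * v l j t)" unfolding 1 ai using 2
          by (simp add: algebra_simps)
      qed
    qed
    then show ?thesis using aan by blast
  qed
qed


lemma right_get: "\<forall>\<^sub>F e in at_right (0::real). P e \<Longrightarrow> \<exists>e>0. P e"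
proof -
  assume "\<forall>\<^sub>F e in at_right (0::real). P e"
  then obtain b where b: "b > 0" "\<forall>y>0. y < b \<longrightarrow> P y" unfolding eventually_at_right_field by blast
  then have "P (b/2)" by simp
  then show ?thesis using b(1) by (intro exI[of _ "b/2"]) simp
qed

lemma right_mono:
  assumes "0 < d" "P d" "\<And>e. 0 < e \<Longrightarrow> e \<le> d \<Longrightarrow> P d \<Longrightarrow> P e"
  shows "\<forall>\<^sub>F e in at_right (0::real). P e"
  unfolding eventually_at_right_field using assms by (intro exI[of _ d]) auto

lemma right_holo: "f holomorphic_on ball 0 d \<Longrightarrow> 0 < d \<Longrightarrow> \<forall>\<^sub>F e in at_right 0. f holomorphic_on ball 0 e"
  by (rule right_mono[where d = d]) (simp_all add: holomorphic_on_subset[OF _ subset_ball])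

lemma right_an: "f analytic_on {0} \<Longrightarrow> \<forall>\<^sub>F e in at_right 0. f holomorphic_on ball 0 e"
  unfolding analytic_on_def using right_holo[of f] by blast

lemma right_cont: "continuous_on (ball 0 d) f \<Longrightarrow> 0 < d \<Longrightarrow> \<forall>\<^sub>F e in at_right 0. continuous_on (ball 0 e) f"
  by (rule right_mono[where d = d]) (simp_all add: continuous_on_subset[OF _ subset_ball])

lemma right_ball: "(\<forall>t\<in>ball 0 d. P t) \<Longrightarrow> 0 < d \<Longrightarrow> \<forall>\<^sub>F e in at_right 0. \<forall>t\<in>ball (0::complex) e. P t"
  by (rule right_mono[where d = d]) auto

lemma right_nhds: "\<forall>\<^sub>F t in nhds (0::complex). P t \<Longrightarrow> \<forall>\<^sub>F e in at_right 0. \<forall>t\<in>ball (0::complex) e. P t"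
proof -
  assume "\<forall>\<^sub>F t in nhds (0::complex). P t"
  then obtain d where "0 < d" "\<forall>t\<in>ball 0 d. P t" using ev_ball by blast
  then show ?thesis by (intro right_ball[of d]) auto
qed

locale curve =
  fixes X :: "(complex^'n) set" and x0 :: "complex^'n" and \<phi> :: "complex \<Rightarrow> complex^'n" and r :: real
  assumes r: "0 < r" and ph: "\<forall>j. (\<lambda>t. \<phi> t $ j) holomorphic_on ball 0 r"
    and ph0: "\<phi> 0 = x0" and phX: "\<phi> ` ball 0 r \<subseteq> X"
begin

lemma phi_ev:
  assumes "open W" "x0 \<in> W"
  shows "\<forall>\<^sub>F t in nhds 0. \<phi> t \<in> W \<and> t \<in> ball 0 r"
proof -
  have "continuous_on (ball 0 r) (\<lambda>t. \<chi> j. \<phi> t $ j)"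
    using ph by (intro continuous_on_vec_lambda holomorphic_on_imp_continuous_on) auto
  then have "continuous_on (ball 0 r) \<phi>" by simp
  then have "isCont \<phi> 0" using r by (simp add: continuous_on_eq_continuous_at)
  then have "(\<phi> \<longlongrightarrow> \<phi> 0) (at 0)" by (simp add: isCont_def)
  then have "\<forall>\<^sub>F t in at 0. \<phi> t \<in> W" using assms ph0 by (intro topological_tendstoD) auto
  then have "\<forall>\<^sub>F t in nhds 0. \<phi> t \<in> W" using assms ph0 by (simp add: eventually_nhds_conv_at)
  then show ?thesis using ball_ev[OF r] by eventually_elim auto
qed

lemma near:
  assumes "open W" "x0 \<in> W"
  obtains d where "0 < d" "d \<le> r" "\<forall>t\<in>ball 0 d. \<phi> t \<in> W \<and> \<phi> t \<in> X"
proof -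
  obtain d where d: "0 < d" "\<forall>t\<in>ball 0 d. \<phi> t \<in> W \<and> t \<in> ball 0 r"
    using ev_ball[OF phi_ev[OF assms]] by blast
  show ?thesis
  proof (rule that[of "min d r"])
    show "0 < min d r" using d r by simp
    show "min d r \<le> r" by simp
    show "\<forall>t\<in>ball 0 (min d r). \<phi> t \<in> W \<and> \<phi> t \<in> X" using d phX by auto
  qed
qed

lemma OX_comp:
  assumes "f \<in> OX X x0"
  shows "\<forall>\<^sub>F e in at_right 0. (\<lambda>t. f (\<phi> t)) holomorphic_on ball 0 e"
proof -
  obtain U G where UG: "open U" "x0 \<in> U" "holo_on U G" "\<forall>y\<in>X \<inter> U. f y = G y"
    using assms unfolding OX_def by blast
  obtain d where d: "0 < d" "d \<le> r" "\<forall>t\<in>ball 0 d. \<phi> t \<in> U \<and> \<phi> t \<in> X"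
    using near[OF UG(1,2)] by blast
  have "(\<lambda>t. G (\<phi> t)) holomorphic_on ball 0 d"
  proof (rule comp_holo[OF UG(3) open_ball])
    show "\<And>j. (\<lambda>t. \<phi> t $ j) holomorphic_on ball 0 d"
      using ph subset_ball[OF d(2)] holomorphic_on_subset by blast
    show "\<phi> ` ball 0 d \<subseteq> U" using d by auto
  qed
  then have "(\<lambda>t. f (\<phi> t)) holomorphic_on ball 0 d"
    by (rule holomorphic_transform) (use d UG in auto)
  then show ?thesis using d(1) by (rule right_holo)
qed

lemma LX_comp:
  assumes "f \<in> LX X x0"
  shows "\<forall>\<^sub>F e in at_right 0. continuous_on (ball 0 e) (\<lambda>t. f (\<phi> t))"
proof -
  obtain U C where UC: "open U" "x0 \<in> U" "C-lipschitz_on (X \<inter> U) f"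
    using assms unfolding LX_def by blast
  obtain d where d: "0 < d" "d \<le> r" "\<forall>t\<in>ball 0 d. \<phi> t \<in> U \<and> \<phi> t \<in> X"
    using near[OF UC(1,2)] by blast
  have "continuous_on (ball 0 r) (\<lambda>t. \<chi> j. \<phi> t $ j)"
    using ph by (intro continuous_on_vec_lambda holomorphic_on_imp_continuous_on) auto
  then have "continuous_on (ball 0 r) \<phi>" by simp
  then have c1: "continuous_on (ball 0 d) \<phi>" by (rule continuous_on_subset[OF _ subset_ball[OF d(2)]])
  have c2: "continuous_on (X \<inter> U) f" using UC(3) by (rule lipschitz_on_continuous_on)
  have c3: "\<phi> ` ball 0 d \<subseteq> X \<inter> U" using d(3) by blast
  have "continuous_on (ball 0 d) (\<lambda>t. f (\<phi> t))"
    by (rule continuous_on_compose2[OF c2 c1 c3])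
  then show ?thesis using d(1) by (rule right_cont)
qed

lemma germ_comp:
  assumes "germ_eq X x0 a b"
  shows "\<forall>\<^sub>F e in at_right 0. \<forall>t\<in>ball 0 e. a (\<phi> t) = b (\<phi> t)"
proof -
  obtain U where U: "open U" "x0 \<in> U" "\<forall>y\<in>X \<inter> U. a y = b y"
    using assms unfolding germ_eq_def by blast
  obtain d where d: "0 < d" "d \<le> r" "\<forall>t\<in>ball 0 d. \<phi> t \<in> U \<and> \<phi> t \<in> X"
    using near[OF U(1,2)] by blast
  have "\<forall>t\<in>ball 0 d. a (\<phi> t) = b (\<phi> t)" using d(3) U(3) by blast
  then show ?thesis using d(1) by (rule right_ball)
qed

end


theorem mainTheorem18:
  fixes X :: "(complex^'n) set" and M :: "(complex^'n \<Rightarrow> complex^'p) set" and x0 :: "complex^'n"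
  assumes "analytic_set X"
    and "x0 \<in> X"
    and "is_submodule_germ X x0 M"
  shows "M \<subseteq> lip_saturation X x0 M \<and> lip_saturation X x0 M \<subseteq> integral_closure X x0 M"
proof
  have MO: "M \<subseteq> OXp X x0" using assms(3) unfolding is_submodule_germ_def by blast
  show "M \<subseteq> lip_saturation X x0 M"
  proof
    fix h assume h: "h \<in> M"
    have hO: "h \<in> OXp X x0" using MO h by blast
    have L1: "(\<lambda>_. 1) \<in> LX X x0" unfolding LX_def
      by (intro CollectI exI[of _ UNIV] exI[of _ 0]) (simp add: lipschitz_on_def)
    have G1: "germ_eq X x0 h (\<lambda>y. \<Sum>i<(1::nat). cscale ((\<lambda>i _. 1) i y) ((\<lambda>i. h) i y))"
      unfolding germ_eq_def cscale_def by (intro exI[of _ UNIV]) (simp add: card_lessThan)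
    show "h \<in> lip_saturation X x0 M" unfolding lip_saturation_def
      using hO L1 G1 h by (intro CollectI conjI exI[of _ 1] exI[of _ "\<lambda>i _. 1"] exI[of _ "\<lambda>i. h"]) auto
  qed
next
  have MO: "M \<subseteq> OXp X x0" using assms(3) unfolding is_submodule_germ_def by blast
  show "lip_saturation X x0 M \<subseteq> integral_closure X x0 M"
  proof
    fix h assume h: "h \<in> lip_saturation X x0 M"
    then have hO: "h \<in> OXp X x0" unfolding lip_saturation_def by blast
    from h obtain k and f :: "nat \<Rightarrow> complex^'n \<Rightarrow> complex" and m where
      fm: "\<forall>i<k. f i \<in> LX X x0 \<and> m i \<in> M" and ge: "germ_eq X x0 h (\<lambda>y. \<Sum>i<k. cscale (f i y) (m i y))"
      unfolding lip_saturation_def by blast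
    show "h \<in> integral_closure X x0 M" unfolding integral_closure_def
    proof (intro CollectI conjI allI impI hO)
      fix \<phi> :: "complex \<Rightarrow> complex^'n" and r
      assume A: "0 < r \<and> (\<forall>j. (\<lambda>t. \<phi> t $ j) holomorphic_on ball 0 r) \<and> \<phi> 0 = x0 \<and> \<phi> ` ball 0 r \<subseteq> X"
      interpret C: curve X x0 \<phi> r using A by unfold_locales auto
      have e1: "\<forall>\<^sub>F e in at_right 0. \<forall>j. (\<lambda>t. h (\<phi> t) $ j) holomorphic_on ball 0 e"
        using hO unfolding OXp_def by (intro eventually_all_finite C.OX_comp) auto
      have e2: "\<forall>\<^sub>F e in at_right 0. \<forall>i\<in>{..<k}. \<forall>j. (\<lambda>t. m i (\<phi> t) $ j) holomorphic_on ball 0 e"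
        using fm MO unfolding OXp_def by (intro eventually_ball_finite ballI eventually_all_finite C.OX_comp) auto
      have e3: "\<forall>\<^sub>F e in at_right 0. \<forall>i\<in>{..<k}. continuous_on (ball 0 e) (\<lambda>t. f i (\<phi> t))"
        using fm by (intro eventually_ball_finite ballI C.LX_comp) auto
      have e4: "\<forall>\<^sub>F e in at_right 0. \<forall>t\<in>ball 0 e. h (\<phi> t) = (\<Sum>i<k. cscale (f i (\<phi> t)) (m i (\<phi> t)))"
        using C.germ_comp[OF ge] .
      have "\<forall>\<^sub>F e in at_right 0. 0 < (e::real)"
        by (rule eventually_at_right_less)
      with e1 e2 e3 e4 have "\<forall>\<^sub>F e in at_right 0. 0 < e \<and> (\<forall>j. (\<lambda>t. h (\<phi> t) $ j) holomorphic_on ball 0 e) \<and>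
          (\<forall>i\<in>{..<k}. \<forall>j. (\<lambda>t. m i (\<phi> t) $ j) holomorphic_on ball 0 e) \<and>
          (\<forall>i\<in>{..<k}. continuous_on (ball 0 e) (\<lambda>t. f i (\<phi> t))) \<and>
          (\<forall>t\<in>ball 0 e. h (\<phi> t) = (\<Sum>i<k. cscale (f i (\<phi> t)) (m i (\<phi> t))))"
        by eventually_elim blast
      then obtain e where E: "0 < e" "\<forall>j. (\<lambda>t. h (\<phi> t) $ j) holomorphic_on ball 0 e"
          "\<forall>i\<in>{..<k}. \<forall>j. (\<lambda>t. m i (\<phi> t) $ j) holomorphic_on ball 0 e"
          "\<forall>i\<in>{..<k}. continuous_on (ball 0 e) (\<lambda>t. f i (\<phi> t))"
          "\<forall>t\<in>ball 0 e. h (\<phi> t) = (\<Sum>i<k. cscale (f i (\<phi> t)) (m i (\<phi> t)))"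
        using right_get by blast
      have E5: "\<forall>t\<in>ball 0 e. \<forall>j. h (\<phi> t) $ j = (\<Sum>i\<in>{..<k}. f i (\<phi> t) * m i (\<phi> t) $ j)"
        using E(5) by (simp add: cscale_def)
      obtain a where a: "\<forall>i\<in>{..<k}. a i analytic_on {0}"
        "\<forall>\<^sub>F t in nhds 0. \<forall>j. h (\<phi> t) $ j = (\<Sum>i\<in>{..<k}. a i t * m i (\<phi> t) $ j)"
        using key[where I="{..<k}" and s=e and g="\<lambda>j t. h (\<phi> t) $ j" and v="\<lambda>i j t. m i (\<phi> t) $ j" and c="\<lambda>i t. f i (\<phi> t)"] E(1,2,3,4) E5
        by auto
      have "\<forall>\<^sub>F s in at_right 0. \<forall>i\<in>{..<k}. a i holomorphic_on ball 0 s"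
        using a(1) by (intro eventually_ball_finite ballI right_an) auto
      moreover have "\<forall>\<^sub>F s in at_right 0. \<forall>t\<in>ball 0 s. \<forall>j. h (\<phi> t) $ j = (\<Sum>i\<in>{..<k}. a i t * m i (\<phi> t) $ j)"
        using a(2) by (rule right_nhds)
      moreover have "\<forall>\<^sub>F s in at_right 0. 0 < (s::real)"
        by (rule eventually_at_right_less)
      ultimately have "\<forall>\<^sub>F s in at_right 0. 0 < s \<and> (\<forall>i\<in>{..<k}. a i holomorphic_on ball 0 s) \<and>
          (\<forall>t\<in>ball 0 s. \<forall>j. h (\<phi> t) $ j = (\<Sum>i\<in>{..<k}. a i t * m i (\<phi> t) $ j))"
        by eventually_elim blast
      then obtain s where S: "0 < s" "\<forall>i\<in>{..<k}. a i holomorphic_on ball 0 s"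
          "\<forall>t\<in>ball 0 s. \<forall>j. h (\<phi> t) $ j = (\<Sum>i\<in>{..<k}. a i t * m i (\<phi> t) $ j)"
        using right_get by blast
      have S3: "\<forall>t\<in>ball 0 s. h (\<phi> t) = (\<Sum>i<k. cscale (a i t) (m i (\<phi> t)))"
        using S(3) by (simp add: vec_eq_iff cscale_def)
      show "\<exists>s k (a :: nat \<Rightarrow> complex \<Rightarrow> complex) m. 0 < s \<and> (\<forall>i<k. a i holomorphic_on ball 0 s \<and> m i \<in> M) \<and>
         (\<forall>t\<in>ball 0 s. h (\<phi> t) = (\<Sum>i<k. cscale (a i t) (m i (\<phi> t))))"
        using S(1,2) S3 fm by blast
    qed
  qed
qed

end
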